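(* Let $b\ge2$, $n\ge1$ be integers and $\mathcal D=\{d,\dots,d+b-1\}$ a set of consecutive integers containing $0$. For $i,j\in\Omega_n(-b,\mathcal D)$, the transition probability $p_{i,j}=\Pr(C_{t+1}=j\mid C_t=i)$ of the $n$-carry process over $(-b,\mathcal D)$ is $$p_{i,j}=\frac{1}{b^n}\sum_{r=0}^{\,-j+1+\left\lfloor\frac{-i-1+(1-n)d}{b}\right\rfloor}(-1)^r\binom{n+1}{r}\binom{n-b(j-1+r)-i-1+(1-n)d}{n},$$ (an empty sum being $0$; in the range of summation the upper entries of the binomial coefficients are nonnegative integers, and $\binom{N}{n}=0$ for $0\le N<n$).
   Context: Carries process over the negative base $(-b,\mathcal D)$: let $\{X_{k,i}\}_{1\le k\le n,\ i\ge0}$ be independent random variables, each uniformly distributed on $\mathcal D$. Set $C_0=0$; for $i\ge0$ let $A_i$ be the unique element of $\mathcal D$ with $A_i\equiv C_i+X_{1,i}+\dots+X_{n,i}\pmod b$, and set $C_{i+1}=(C_i+X_{1,i}+\dots+X_{n,i}-A_i)/(-b)$. The state space $\Omega_n(-b,\mathcal D)$ is the set of integers $c$ with $\Pr(C_i=c)>0$ for some $i\ge0$. *)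

theory Defs
  imports "HOL-Probability.Probability"
begin

definition digits :: "int \<Rightarrow> int \<Rightarrow> int set" where
  "digits b d = {d..d+b-1}"

fun sum_dist :: "int \<Rightarrow> int \<Rightarrow> nat \<Rightarrow> int pmf" where
  "sum_dist b d 0 = return_pmf 0"
| "sum_dist b d (Suc k) =
     bind_pmf (sum_dist b d k) (\<lambda>s. map_pmf (\<lambda>x. s + x) (pmf_of_set (digits b d)))"

definition digit_out :: "int \<Rightarrow> int \<Rightarrow> int \<Rightarrow> int" where
  "digit_out b d v = (THE a. a \<in> digits b d \<and> a mod b = v mod b)"

definition carry_step :: "int \<Rightarrow> int \<Rightarrow> int \<Rightarrow> int \<Rightarrow> int" where
  "carry_step b d c s = (c + s - digit_out b d (c + s)) div (- b)"

fun carry_dist :: "int \<Rightarrow> int \<Rightarrow> nat \<Rightarrow> nat \<Rightarrow> int pmf" where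
  "carry_dist b d n 0 = return_pmf 0"
| "carry_dist b d n (Suc t) =
     bind_pmf (carry_dist b d n t) (\<lambda>c. map_pmf (carry_step b d c) (sum_dist b d n))"

definition carry_joint :: "int \<Rightarrow> int \<Rightarrow> nat \<Rightarrow> nat \<Rightarrow> (int \<times> int) pmf" where
  "carry_joint b d n t =
     bind_pmf (carry_dist b d n t) (\<lambda>c. map_pmf (\<lambda>s. (c, carry_step b d c s)) (sum_dist b d n))"

definition trans_prob :: "int \<Rightarrow> int \<Rightarrow> nat \<Rightarrow> nat \<Rightarrow> int \<Rightarrow> int \<Rightarrow> real" where
  "trans_prob b d n t i j = pmf (carry_joint b d n t) (i, j) / pmf (carry_dist b d n t) i"

definition state_space :: "int \<Rightarrow> int \<Rightarrow> nat \<Rightarrow> int set" where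
  "state_space b d n = {c. \<exists>t. pmf (carry_dist b d n t) c > 0}"

end

theory Submission
  imports Defs
begin

lemma sum_dist_Suc_alt:
  "sum_dist b d (Suc k) = bind_pmf (pmf_of_set (digits b d)) (\<lambda>x. map_pmf (\<lambda>s. s + x) (sum_dist b d k))"
  by (simp add: map_pmf_def bind_commute_pmf[of "sum_dist b d k"] o_def)

lemma pmf_sum_dist_Suc:
  assumes "b \<ge> 1"
  shows "pmf (sum_dist b d (Suc k)) s = (\<Sum>x\<in>digits b d. pmf (sum_dist b d k) (s - x)) / real_of_int b"
proof -
  have ne: "digits b d \<noteq> {}" "finite (digits b d)" using assms by (auto simp: digits_def)
  have c: "real (card (digits b d)) = real_of_int b" using assms by (simp add: digits_def)
  have m: "pmf (map_pmf (\<lambda>s. s + x) (sum_dist b d k)) s = pmf (sum_dist b d k) (s - x)" for x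
  proof -
    have "pmf (map_pmf (\<lambda>s. s + x) (sum_dist b d k)) ((s - x) + x) = pmf (sum_dist b d k) (s - x)"
      by (rule pmf_map_inj') (auto simp: inj_def)
    then show ?thesis by simp
  qed
  show ?thesis
    unfolding sum_dist_Suc_alt pmf_bind_pmf_of_set[OF ne] c m ..
qed

fun H :: "nat \<Rightarrow> int \<Rightarrow> real" where
  "H 0 m = (if m = 0 then 1 else 0)"
| "H (Suc k) m = (\<Sum>y\<in>{0..m}. H k y)"

lemma H_neg: "m < 0 \<Longrightarrow> H k m = 0"
  by (cases k) auto

lemma H_diff: "H (Suc k) m = H (Suc k) (m - 1) + H k m"
proof (cases "m < 0")
  case True then show ?thesis by (simp add: H_neg)
next
  case False
  then have "{0..m} = insert m {0..m-1}" by auto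
  then show ?thesis by simp
qed

lemma H_window: "(\<Sum>x<c. H k (m - int x)) = H (Suc k) m - H (Suc k) (m - int c)"
proof (induction c)
  case 0 then show ?case by simp
next
  case (Suc c)
  have "H (Suc k) (m - int c) = H (Suc k) (m - int (Suc c)) + H k (m - int c)"
    using H_diff[of k "m - int c"] by (simp add: algebra_simps)
  then show ?case using Suc by simp
qed

lemma H_zero: "H k 0 = 1"
  by (induction k) auto

lemma H_closed: "H (Suc k) (int m) = real ((m + k) choose k)"
proof (induction k arbitrary: m)
  case 0
  have "{0..int m} = insert 0 {1..int m}" by auto
  then show ?case by simp
next
  case (Suc k)
  note IHk = Suc.IH
  show ?case
  proof (induction m)
    case 0 then show ?case using H_zero by simp
  next
    case (Suc m)
    have "H (Suc (Suc k)) (int (Suc m)) = H (Suc (Suc k)) (int m) + H (Suc k) (int (Suc m))"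
      using H_diff[of "Suc k" "int (Suc m)"] by simp
    also have "\<dots> = real ((m + Suc k) choose Suc k) + real ((Suc m + k) choose k)"
      using Suc.IH IHk[of "Suc m"] by (simp del: H.simps)
    also have "\<dots> = real ((Suc m + Suc k) choose Suc k)"
      by (simp add: add.commute)
    finally show ?case .
  qed
qed

lemma pascal_sum:
  fixes A :: "nat \<Rightarrow> real"
  shows "(\<Sum>r\<le>k. (-1)^r * real (k choose r) * (A r - A (Suc r))) =
         (\<Sum>r\<le>Suc k. (-1)^r * real (Suc k choose r) * A r)"
proof -
  have e1: "(\<Sum>r\<le>Suc k. (-1)^r * real (Suc k choose r) * A r)
      = A 0 + ((\<Sum>r\<le>k. (-1)^Suc r * real (k choose Suc r) * A (Suc r))
                 + (\<Sum>r\<le>k. (-1)^Suc r * real (k choose r) * A (Suc r)))"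
    by (subst sum.atMost_Suc_shift) (simp add: sum.distrib[symmetric] algebra_simps)
  have e2: "A 0 + (\<Sum>r\<le>k. (-1)^Suc r * real (k choose Suc r) * A (Suc r))
           = (\<Sum>r\<le>k. (-1)^r * real (k choose r) * A r)"
  proof -
    have "A 0 + (\<Sum>r\<le>k. (-1)^Suc r * real (k choose Suc r) * A (Suc r))
           = (\<Sum>r\<le>Suc k. (-1)^r * real (k choose r) * A r)"
      by (subst sum.atMost_Suc_shift) simp
    then show ?thesis by simp
  qed
  have e3: "(\<Sum>r\<le>k. (-1)^r * real (k choose r) * (A r - A (Suc r))) =
      (\<Sum>r\<le>k. (-1)^r * real (k choose r) * A r) + (\<Sum>r\<le>k. (-1)^Suc r * real (k choose r) * A (Suc r))"
    by (simp add: sum.distrib[symmetric] algebra_simps)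
  show ?thesis using e1 e2 e3 by simp
qed

lemma sum_digits:
  assumes "b \<ge> 0"
  shows "(\<Sum>x\<in>digits b d. f x) = (\<Sum>y<nat b. f (d + int y))"
  unfolding digits_def
  by (rule sum.reindex_bij_witness[where i="\<lambda>y. d + int y" and j="\<lambda>x. nat (x - d)"])
     (use assms in auto)

lemma P_formula:
  assumes "b \<ge> 1"
  shows "pmf (sum_dist b d k) s =
    (\<Sum>r\<le>k. (-1)^r * real (k choose r) * H k (s - int k * d - b * int r)) / real_of_int b ^ k"
proof (induction k arbitrary: s)
  case 0
  then show ?case by (simp add: indicator_def)
next
  case (Suc k)
  define A where "A r = H (Suc k) (s - int (Suc k) * d - b * int r)" for r
  have inner: "(\<Sum>y<nat b. H k (s - (d + int y) - int k * d - b * int r)) = A r - A (Suc r)" for r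
  proof -
    have "(\<Sum>y<nat b. H k (s - (d + int y) - int k * d - b * int r))
        = (\<Sum>y<nat b. H k ((s - int (Suc k) * d - b * int r) - int y))"
      by (rule sum.cong) (auto simp: algebra_simps)
    also have "\<dots> = A r - A (Suc r)"
      unfolding H_window A_def using assms by (simp add: algebra_simps)
    finally show ?thesis .
  qed
  have "pmf (sum_dist b d (Suc k)) s
      = (\<Sum>y<nat b. pmf (sum_dist b d k) (s - (d + int y))) / real_of_int b"
    using pmf_sum_dist_Suc[OF assms, of d k s] sum_digits[of b "\<lambda>x. pmf (sum_dist b d k) (s - x)" d] assms
    by simp
  also have "\<dots> = (\<Sum>y<nat b. \<Sum>r\<le>k. (-1)^r * real (k choose r) * H k (s - (d + int y) - int k * d - b * int r))
        / real_of_int b ^ Suc k"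
    unfolding Suc.IH by (simp add: sum_divide_distrib[symmetric])
  also have "\<dots> = (\<Sum>r\<le>k. (-1)^r * real (k choose r) * (\<Sum>y<nat b. H k (s - (d + int y) - int k * d - b * int r)))
        / real_of_int b ^ Suc k"
    by (subst sum.swap) (simp add: sum_distrib_left)
  also have "\<dots> = (\<Sum>r\<le>k. (-1)^r * real (k choose r) * (A r - A (Suc r))) / real_of_int b ^ Suc k"
    unfolding inner ..
  also have "\<dots> = (\<Sum>r\<le>Suc k. (-1)^r * real (Suc k choose r) * A r) / real_of_int b ^ Suc k"
    unfolding pascal_sum ..
  finally show ?case unfolding A_def .
qed

lemma divb: assumes "(b::int) \<ge> 1" shows "(x div b = q) \<longleftrightarrow> b * q \<le> x \<and> x < b * q + b"
proof
  assume q: "x div b = q"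
  have e: "x = b * q + x mod b" using q div_mult_mod_eq[of x b] by (simp add: mult.commute)
  have "0 \<le> x mod b" "x mod b < b" using assms by auto
  with e show "b * q \<le> x \<and> x < b * q + b" by linarith
next
  assume h: "b * q \<le> x \<and> x < b * q + b"
  show "x div b = q" by (rule int_div_pos_eq[of x b q "x - b*q"]) (use h in auto)
qed

lemma digit_out_eq:
  assumes "b \<ge> 1"
  shows "digit_out b d v = d + (v - d) mod b"
  unfolding digit_out_def
proof (rule the_equality)
  have m1: "0 \<le> (v - d) mod b" "(v - d) mod b < b" using assms by auto
  have m2: "(d + (v - d) mod b) mod b = (d + (v - d)) mod b"
    by (rule mod_add_right_eq)
  show "d + (v - d) mod b \<in> digits b d \<and> (d + (v - d) mod b) mod b = v mod b"
    unfolding digits_def using m1 m2 by simp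
next
  fix a assume a: "a \<in> digits b d \<and> a mod b = v mod b"
  then have r: "0 \<le> a - d" "a - d < b" by (auto simp: digits_def)
  have "(a - d) mod b = (v - d) mod b" by (rule mod_diff_cong) (use a in auto)
  moreover have "(a - d) mod b = a - d" using r by simp
  ultimately show "a = d + (v - d) mod b" by simp
qed

lemma carry_step_eq:
  assumes "b \<ge> 1"
  shows "carry_step b d c s = - ((c + s - d) div b)"
proof -
  have "c + s - digit_out b d (c + s) = (c + s - d) - (c + s - d) mod b"
    using digit_out_eq[OF assms, of d "c + s"] by simp
  also have "\<dots> = b * ((c + s - d) div b)" by (rule minus_mod_eq_mult_div)
  finally have e: "c + s - digit_out b d (c + s) = b * ((c + s - d) div b)" .
  have "b * q div - b = - q" for q
    using assms by (smt (verit) minus_mult_minus nonzero_mult_div_cancel_left)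
  then show ?thesis unfolding carry_step_def e by blast
qed

lemma carry_step_iff:
  assumes "b \<ge> 1"
  shows "carry_step b d c s = j \<longleftrightarrow> s \<in> {- b * j - c + d .. - b * j - c + d + b - 1}"
proof -
  have "carry_step b d c s = j \<longleftrightarrow> (c + s - d) div b = - j"
    using carry_step_eq[OF assms] by auto
  also have "\<dots> \<longleftrightarrow> b * (-j) \<le> c + s - d \<and> c + s - d < b * (-j) + b"
    by (rule divb[OF assms])
  also have "\<dots> \<longleftrightarrow> s \<in> {- b * j - c + d .. - b * j - c + d + b - 1}"
    by auto
  finally show ?thesis .
qed

lemma pmf_map_step:
  assumes "b \<ge> 1"
  shows "pmf (map_pmf (carry_step b d i) (sum_dist b d n)) j =
    (\<Sum>s\<in>{- b * j - i + d .. - b * j - i + d + b - 1}. pmf (sum_dist b d n) s)"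
proof -
  have "carry_step b d i -` {j} = {- b * j - i + d .. - b * j - i + d + b - 1}"
    using carry_step_iff[OF assms] by blast
  then show ?thesis unfolding pmf_map by (simp add: measure_measure_pmf_finite)
qed

lemma window_Suc:
  assumes "b \<ge> 1"
  shows "(\<Sum>s\<in>{- b * j - i + d .. - b * j - i + d + b - 1}. pmf (sum_dist b d n) s) =
    real_of_int b * pmf (sum_dist b d (Suc n)) (- b * j - i + 2 * d + b - 1)"
proof -
  let ?T = "- b * j - i + 2 * d + b - 1"
  have "(\<Sum>x\<in>digits b d. pmf (sum_dist b d n) (?T - x)) =
    (\<Sum>s\<in>{- b * j - i + d .. - b * j - i + d + b - 1}. pmf (sum_dist b d n) s)"
    by (rule sum.reindex_bij_witness[where i="\<lambda>s. ?T - s" and j="\<lambda>x. ?T - x"])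
       (auto simp: digits_def)
  then show ?thesis using pmf_sum_dist_Suc[OF assms, of d n ?T] assms by simp
qed

lemma joint_pmf:
  "pmf (carry_joint b d n t) (i, j) =
     pmf (carry_dist b d n t) i * pmf (map_pmf (carry_step b d i) (sum_dist b d n)) j"
proof -
  let ?q = "pmf (map_pmf (carry_step b d i) (sum_dist b d n)) j"
  have f: "pmf (map_pmf (\<lambda>s. (c, carry_step b d c s)) (sum_dist b d n)) (i, j) = indicator {i} c * ?q" for c
  proof (cases "c = i")
    case True
    have "(\<lambda>s. (c, carry_step b d c s)) -` {(i, j)} = carry_step b d i -` {j}" using True by auto
    then show ?thesis using True by (simp add: pmf_map)
  next
    case False
    have "(\<lambda>s. (c, carry_step b d c s)) -` {(i, j)} = {}" using False by auto
    then show ?thesis using False by (simp add: pmf_map)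
  qed
  show ?thesis
    unfolding carry_joint_def pmf_bind f integral_mult_left_zero
    by (simp add: measure_pmf_single)
qed

theorem theorem3:
  fixes b d :: int and n t :: nat and i j :: int
  assumes "b \<ge> 2" and "n \<ge> 1" and "0 \<in> digits b d"
    and "i \<in> state_space b d n" and "j \<in> state_space b d n"
    and "pmf (carry_dist b d n t) i > 0"
  shows "trans_prob b d n t i j =
    (1 / real_of_int b ^ n) *
    (\<Sum>r\<in>{0 .. - j + 1 + \<lfloor>real_of_int (- i - 1 + (1 - int n) * d) / real_of_int b\<rfloor>}.
       (-1) ^ nat r * real ((n + 1) choose nat r) *
       (real_of_int (int n - b * (j - 1 + r) - i - 1 + (1 - int n) * d) gchoose n))"
proof -
  have b1: "b \<ge> 1" using assms(1) by simp
  define q where "q = pmf (map_pmf (carry_step b d i) (sum_dist b d n)) j"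
  have tp: "trans_prob b d n t i j = q"
    unfolding trans_prob_def joint_pmf q_def using assms(6) by simp
  define X where "X = - i - 1 + (1 - int n) * d"
  define M where "M = X + (1 - j) * b"
  define g where "g r = (-1) ^ nat r * real ((n + 1) choose nat r) * H (Suc n) (M - b * r)" for r :: int
  have q1: "q = real_of_int b * pmf (sum_dist b d (Suc n)) (- b * j - i + 2 * d + b - 1)"
    unfolding q_def pmf_map_step[OF b1] window_Suc[OF b1] ..
  have Targ: "- b * j - i + 2 * d + b - 1 - int (Suc n) * d - b * int r = M - b * int r" for r
    by (simp add: M_def X_def algebra_simps)
  have q2: "q = real_of_int b * ((\<Sum>r\<le>Suc n. (-1)^r * real (Suc n choose r) * H (Suc n) (M - b * int r))
      / real_of_int b ^ Suc n)"
    unfolding q1 P_formula[OF b1] Targ ..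
  have s1: "(\<Sum>r\<le>Suc n. (-1)^r * real (Suc n choose r) * H (Suc n) (M - b * int r)) = (\<Sum>r\<in>{0..int n + 1}. g r)"
    by (rule sum.reindex_bij_witness[where i=nat and j=int]) (auto simp: g_def)
  have U: "- j + 1 + \<lfloor>real_of_int (- i - 1 + (1 - int n) * d) / real_of_int b\<rfloor> = M div b"
  proof -
    have "\<lfloor>real_of_int (- i - 1 + (1 - int n) * d) / real_of_int b\<rfloor> = X div b"
      unfolding X_def by (rule floor_divide_of_int_eq)
    moreover have "M div b = X div b + (1 - j)" unfolding M_def using b1 by simp
    ultimately show ?thesis by simp
  qed
  have s2: "(\<Sum>r\<in>{0 .. M div b}.
       (-1) ^ nat r * real ((n + 1) choose nat r) *
       (real_of_int (int n - b * (j - 1 + r) - i - 1 + (1 - int n) * d) gchoose n)) = (\<Sum>r\<in>{0 .. M div b}. g r)"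
  proof (rule sum.cong[OF refl])
    fix r assume r: "r \<in> {0 .. M div b}"
    have "b * (M div b) \<le> M" using b1
      by (metis div_mult_mod_eq le_add_same_cancel1 mult.commute pos_mod_sign zero_less_one_class.zero_le_one order_less_le_trans zero_less_one) 
    moreover have "b * r \<le> b * (M div b)" using r b1 by (auto intro: mult_left_mono)
    ultimately have nn: "0 \<le> M - b * r" by simp
    have e: "int n - b * (j - 1 + r) - i - 1 + (1 - int n) * d = int (n + nat (M - b * r))"
      using nn by (simp add: M_def X_def algebra_simps)
    have "(real_of_int (int n - b * (j - 1 + r) - i - 1 + (1 - int n) * d) gchoose n)
        = real ((n + nat (M - b * r)) choose n)"
      unfolding e of_int_of_nat_eq binomial_gbinomial ..
    also have "\<dots> = H (Suc n) (M - b * r)"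
      using H_closed[of n "nat (M - b * r)"] nn by (simp add: add.commute)
    finally show "(-1) ^ nat r * real ((n + 1) choose nat r) *
       (real_of_int (int n - b * (j - 1 + r) - i - 1 + (1 - int n) * d) gchoose n) = g r"
      unfolding g_def by simp
  qed
  have s3: "(\<Sum>r\<in>{0 .. M div b}. g r) = (\<Sum>r\<in>{0 .. min (M div b) (int n + 1)}. g r)"
    by (rule sum.mono_neutral_right) (auto simp: g_def)
  have s4: "(\<Sum>r\<in>{0 .. int n + 1}. g r) = (\<Sum>r\<in>{0 .. min (M div b) (int n + 1)}. g r)"
  proof (rule sum.mono_neutral_right)
    show "\<forall>r\<in>{0..int n + 1} - {0..min (M div b) (int n + 1)}. g r = 0"
    proof
      fix r assume r: "r \<in> {0..int n + 1} - {0..min (M div b) (int n + 1)}"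
      then have "M div b + 1 \<le> r" by auto
      then have "b * (M div b + 1) \<le> b * r" using b1 by (auto intro: mult_left_mono)
      moreover have "M < b * (M div b + 1)" using b1
        by (metis add.commute distrib_left div_mult_mod_eq mult.right_neutral add_less_cancel_left mult.commute pos_mod_bound zero_less_one order_less_le_trans)
      ultimately have "M - b * r < 0" by simp
      then show "g r = 0" unfolding g_def by (simp add: H_neg)
    qed
  qed auto
  show ?thesis
    unfolding tp q2 s1 U s2 s3 s4[symmetric]
    using b1 by (simp add: field_simps)
qed

end
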